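(* Let $K$ be a field, $A=K[x_1,\dots,x_n]$, and $P=(x_1^{e_1},\dots,x_r^{e_r})$ for some $r\le n$ and integers $2\le e_1\le\cdots\le e_r$. Let $J\subset A$ be a strongly stable ideal and $I\subset A$ a monomial ideal containing $P+J$. Fix variables $a=x_i$, $b=x_k$ with $i<k$. Let $I'$ be the ideal of $A$ generated by all minimal monomial generators of $I$ other than $b^{e_b}$ (where $e_b=e_k$ if $k\le r$; if $k>r$, take $I'=I$). Let $T'$ be the $\{a,b\}$-compression of $I'$ and $T=T'+P$. Then $J\subset T$.
   Context: A monomial ideal $J$ is strongly stable if whenever $x_l m\in J$ for a monomial $m$, then $x_p m\in J$ for all $p<l$. For a monomial ideal $I$ and variables $a=x_i$, $b=x_k$ with $i<k$, write $I=\bigoplus_f fV_f$, where $f$ ranges over monomials in the variables other than $a,b$ and each $V_f$ is a monomial ideal of $K[a,b]$. The $\{a,b\}$-compression of $I$ is $\bigoplus_f fN_f$, where $N_f\subset K[a,b]$ is the lex ideal (with respect to $a>b$) having the same Hilbert function as $V_f$. A lex ideal is a monomial ideal whose degree-$d$ monomials form, for every $d$, an initial lexicographic segment of all degree-$d$ monomials. *)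

theory Defs
  imports Main
begin

(* Monomials of A = K[x_0,...,x_{n-1}] are exponent vectors (nat => nat) vanishing
  outside {0..<n}; a monomial ideal is identified with its set of monomials
  (divisibility = pointwise order). Variables are indexed from 0. *)

definition monoms :: "nat \<Rightarrow> (nat \<Rightarrow> nat) set" where
  "monoms n = {m. \<forall>j. n \<le> j \<longrightarrow> m j = 0}"

definition monomial_ideal :: "nat \<Rightarrow> (nat \<Rightarrow> nat) set \<Rightarrow> bool" where
  "monomial_ideal n I \<longleftrightarrow> I \<subseteq> monoms n \<and>
     (\<forall>m\<in>I. \<forall>m'\<in>monoms n. m \<le> m' \<longrightarrow> m' \<in> I)"

definition gen_ideal :: "nat \<Rightarrow> (nat \<Rightarrow> nat) set \<Rightarrow> (nat \<Rightarrow> nat) set" where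
  "gen_ideal n G = {m \<in> monoms n. \<exists>g\<in>G. g \<le> m}"

definition min_gens :: "(nat \<Rightarrow> nat) set \<Rightarrow> (nat \<Rightarrow> nat) set" where
  "min_gens I = {m \<in> I. \<forall>m'\<in>I. m' \<le> m \<longrightarrow> m' = m}"

definition strongly_stable :: "nat \<Rightarrow> (nat \<Rightarrow> nat) set \<Rightarrow> bool" where
  "strongly_stable n J \<longleftrightarrow> monomial_ideal n J \<and>
     (\<forall>m\<in>monoms n. \<forall>l<n. \<forall>p<l. m(l := m l + 1) \<in> J \<longrightarrow> m(p := m p + 1) \<in> J)"

definition var_pow :: "nat \<Rightarrow> nat \<Rightarrow> (nat \<Rightarrow> nat)" where
  "var_pow j c = (\<lambda>t. if t = j then c else 0)"

definition P_ideal :: "nat \<Rightarrow> nat \<Rightarrow> (nat \<Rightarrow> nat) \<Rightarrow> (nat \<Rightarrow> nat) set" where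
  "P_ideal n r e = gen_ideal n {var_pow j (e j) | j. j < r}"

(* Monomials of K[a,b]: a^p b^q is the pair (p,q). *)
definition deg_part2 :: "(nat \<times> nat) set \<Rightarrow> nat \<Rightarrow> (nat \<times> nat) set" where
  "deg_part2 V d = {(p, q) \<in> V. p + q = d}"

definition monomial_ideal2 :: "(nat \<times> nat) set \<Rightarrow> bool" where
  "monomial_ideal2 N \<longleftrightarrow> (\<forall>p q p' q'. (p, q) \<in> N \<and> p \<le> p' \<and> q \<le> q' \<longrightarrow> (p', q') \<in> N)"

(* Lex ideal w.r.t. a > b: in each degree the monomials form an initial lex segment
  (a^d > a^(d-1) b > ... > b^d). *)
definition lex_ideal2 :: "(nat \<times> nat) set \<Rightarrow> bool" where
  "lex_ideal2 N \<longleftrightarrow> monomial_ideal2 N \<and>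
     (\<forall>p q p'. (p, q) \<in> N \<and> p \<le> p' \<and> p' \<le> p + q \<longrightarrow> (p', p + q - p') \<in> N)"

definition lex_of :: "(nat \<times> nat) set \<Rightarrow> (nat \<times> nat) set" where
  "lex_of V = (THE N. lex_ideal2 N \<and> (\<forall>d. card (deg_part2 N d) = card (deg_part2 V d)))"

definition fiber :: "(nat \<Rightarrow> nat) set \<Rightarrow> nat \<Rightarrow> nat \<Rightarrow> (nat \<Rightarrow> nat) \<Rightarrow> (nat \<times> nat) set" where
  "fiber I i k f = {(p, q). f(i := p, k := q) \<in> I}"

definition compression :: "nat \<Rightarrow> nat \<Rightarrow> nat \<Rightarrow> (nat \<Rightarrow> nat) set \<Rightarrow> (nat \<Rightarrow> nat) set" where
  "compression n i k I = {m \<in> monoms n. (m i, m k) \<in> lex_of (fiber I i k (m(i := 0, k := 0)))}"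

end

theory Submission
  imports Defs
begin

lemma deg_part2_sub: "deg_part2 V d \<subseteq> (\<lambda>p. (p, d - p)) ` {0..d}"
  unfolding deg_part2_def by (force simp: image_iff)

lemma deg_fin: "finite (deg_part2 V d)"
  by (rule finite_subset[OF deg_part2_sub]) auto

lemma deg_card_le: "card (deg_part2 V d) \<le> d + 1"
proof -
  have "card (deg_part2 V d) \<le> card ((\<lambda>p. (p, d - p)) ` {0..d})"
    by (rule card_mono[OF _ deg_part2_sub]) auto
  also have "\<dots> \<le> card {0..d}" by (rule card_image_le) auto
  finally show ?thesis by simp
qed

lemma lex_char:
  assumes "lex_ideal2 N"
  shows "(p,q) \<in> N \<longleftrightarrow> q + 1 \<le> card (deg_part2 N (p+q))"
proof
  assume h: "(p,q) \<in> N"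
  have sub: "(\<lambda>p'. (p', p+q-p')) ` {p..p+q} \<subseteq> deg_part2 N (p+q)"
    using assms h unfolding lex_ideal2_def deg_part2_def by auto
  have "card ((\<lambda>p'. (p', p+q-p')) ` {p..p+q}) = q + 1"
    by (subst card_image) (auto simp: inj_on_def)
  then show "q + 1 \<le> card (deg_part2 N (p+q))"
    using card_mono[OF deg_fin sub] by simp
next
  assume c: "q + 1 \<le> card (deg_part2 N (p+q))"
  show "(p,q) \<in> N"
  proof (rule ccontr)
    assume nh: "(p,q) \<notin> N"
    have sub: "deg_part2 N (p+q) \<subseteq> (\<lambda>p'. (p', p+q-p')) ` {p+1..p+q}"
    proof
      fix x assume x: "x \<in> deg_part2 N (p+q)"
      obtain a b where ab: "x = (a,b)" by (cases x)
      have abN: "(a,b) \<in> N" and s: "a + b = p + q" using x ab by (auto simp: deg_part2_def)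
      have "p < a"
      proof (rule ccontr)
        assume na: "\<not> p < a"
        have "(p, a + b - p) \<in> N"
          using assms abN s na unfolding lex_ideal2_def by (metis le_add1 not_less s)
        then show False using nh s by simp
      qed
      then show "x \<in> (\<lambda>p'. (p', p+q-p')) ` {p+1..p+q}" using ab s by (auto simp: image_iff)
    qed
    have "card (deg_part2 N (p+q)) \<le> card ((\<lambda>p'. (p', p+q-p')) ` {p+1..p+q})"
      by (rule card_mono[OF _ sub]) auto
    also have "\<dots> \<le> card {p+1..p+q}" by (rule card_image_le) auto
    finally show False using c by simp
  qed
qed

lemma growth:
  assumes "monomial_ideal2 V" "1 \<le> card (deg_part2 V d)"
  shows "card (deg_part2 V d) + 1 \<le> card (deg_part2 V (Suc d))"
proof -
  let ?S = "deg_part2 V d"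
  have ne: "?S \<noteq> {}" using assms(2) by auto
  define p1 where "p1 = Max (fst ` ?S)"
  have "p1 \<in> fst ` ?S" unfolding p1_def using ne deg_fin by (intro Max_in) auto
  then obtain q1 where q1: "(p1,q1) \<in> ?S" by force
  have le: "\<And>x. x \<in> ?S \<Longrightarrow> fst x \<le> p1" unfolding p1_def using deg_fin by (intro Max_ge) auto
  have m1: "\<And>p q. (p,q) \<in> V \<Longrightarrow> (p, q+1) \<in> V" "\<And>p q. (p,q) \<in> V \<Longrightarrow> (p+1, q) \<in> V"
    using assms(1) unfolding monomial_ideal2_def by (meson le_add1 order_refl)+
  have sub: "insert (p1+1, q1) ((\<lambda>(p,q). (p, q+1)) ` ?S) \<subseteq> deg_part2 V (Suc d)"
    using m1 q1 unfolding deg_part2_def by auto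
  have notin: "(p1+1, q1) \<notin> (\<lambda>(p,q). (p, q+1)) ` ?S" using le by force
  have inj: "inj_on (\<lambda>(p,q). (p, q+1::nat)) ?S" by (auto simp: inj_on_def)
  have "card (insert (p1+1, q1) ((\<lambda>(p,q). (p, q+1)) ` ?S)) = card ?S + 1"
    using notin deg_fin inj by (simp add: card_image)
  then show ?thesis using card_mono[OF deg_fin sub] by simp
qed

lemma lex_exists:
  assumes "monomial_ideal2 V"
  shows "\<exists>N. lex_ideal2 N \<and> (\<forall>d. card (deg_part2 N d) = card (deg_part2 V d))"
proof -
  define c where "c d = card (deg_part2 V d)" for d
  have G: "c d + s \<le> c (d + s)" if "1 \<le> c d" for d s
    using that
  proof (induction s)
    case 0 then show ?case by simp
  next
    case (Suc s)
    then have "1 \<le> c (d+s)" by simp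
    then have "c (d+s) + 1 \<le> c (Suc (d+s))" using growth[OF assms] unfolding c_def by blast
    then show ?case using Suc by simp
  qed
  define N where "N = {(p,q). q + 1 \<le> c (p+q)}"
  have mi: "monomial_ideal2 N"
    unfolding monomial_ideal2_def
  proof (intro allI impI)
    fix p q p' q' assume h: "(p, q) \<in> N \<and> p \<le> p' \<and> q \<le> q'"
    then have h1: "q + 1 \<le> c (p+q)" by (simp add: N_def)
    have a: "c (p+q) + (q'-q) \<le> c (p+q + (q'-q))" using G h1 by simp
    then have "1 \<le> c (p+q + (q'-q))" using h1 by simp
    then have b: "c (p+q + (q'-q)) + (p'-p) \<le> c (p+q + (q'-q) + (p'-p))" using G by blast
    have e1: "p+q + (q'-q) = p+q'" and e2: "p+q' + (p'-p) = p'+q'" using h by auto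
    have "Suc q' \<le> c (p'+q')" using a b h1 h unfolding e1 e2 by linarith
    then show "(p', q') \<in> N" by (simp add: N_def)
  qed
  have lx: "lex_ideal2 N"
    unfolding lex_ideal2_def using mi by (auto simp: N_def)
  have cd: "card (deg_part2 N d) = c d" for d
  proof -
    have le: "c d \<le> d + 1" unfolding c_def by (rule deg_card_le)
    have "deg_part2 N d = (\<lambda>t. (d-t,t)) ` {..<c d}"
      using le unfolding deg_part2_def N_def by (force simp: image_iff)
    moreover have "inj_on (\<lambda>t. (d-t,t)) {..<c d}" by (auto simp: inj_on_def)
    ultimately show ?thesis by (simp add: card_image)
  qed
  show ?thesis using lx cd unfolding c_def by blast
qed

lemma lex_of_char:
  assumes "monomial_ideal2 V"
  shows "(p,q) \<in> lex_of V \<longleftrightarrow> q + 1 \<le> card (deg_part2 V (p+q))"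
proof -
  have ex1: "\<exists>!N. lex_ideal2 N \<and> (\<forall>d. card (deg_part2 N d) = card (deg_part2 V d))"
  proof (rule ex_ex1I)
    show "\<exists>N. lex_ideal2 N \<and> (\<forall>d. card (deg_part2 N d) = card (deg_part2 V d))"
      by (rule lex_exists[OF assms])
  next
    fix N1 N2
    assume h1: "lex_ideal2 N1 \<and> (\<forall>d. card (deg_part2 N1 d) = card (deg_part2 V d))"
      and h2: "lex_ideal2 N2 \<and> (\<forall>d. card (deg_part2 N2 d) = card (deg_part2 V d))"
    show "N1 = N2"
    proof (rule set_eqI)
      fix x :: "nat \<times> nat"
      obtain a b where x: "x = (a,b)" by (cases x)
      show "x \<in> N1 \<longleftrightarrow> x \<in> N2"
        using lex_char[of N1 a b] lex_char[of N2 a b] h1 h2 x by simp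
    qed
  qed
  have "lex_ideal2 (lex_of V) \<and> (\<forall>d. card (deg_part2 (lex_of V) d) = card (deg_part2 V d))"
    unfolding lex_of_def by (rule theI'[OF ex1])
  then show ?thesis using lex_char[of "lex_of V" p q] by simp
qed

lemma min_gen_below:
  assumes "I \<subseteq> monoms n" "u \<in> I"
  shows "\<exists>g\<in>min_gens I. g \<le> u"
  using assms(2)
proof (induction "\<Sum>t<n. u t" arbitrary: u rule: less_induct)
  case less
  show ?case
  proof (cases "u \<in> min_gens I")
    case True then show ?thesis by auto
  next
    case False
    then obtain m' where m': "m' \<in> I" "m' \<le> u" "m' \<noteq> u"
      using less.prems unfolding min_gens_def by auto
    then obtain t where t: "m' t \<noteq> u t" by (auto simp: fun_eq_iff)
    have tn: "t < n"
    proof (rule ccontr)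
      assume "\<not> t < n"
      then have "m' t = 0" "u t = 0" using m'(1) less.prems assms(1) unfolding monoms_def by auto
      then show False using t by simp
    qed
    have lt: "m' t < u t" using t m'(2) by (simp add: le_fun_def order_less_le)
    have "(\<Sum>t<n. m' t) < (\<Sum>t<n. u t)"
      by (rule sum_strict_mono_ex1) (use m'(2) lt tn in \<open>auto simp: le_fun_def\<close>)
    then obtain g where "g \<in> min_gens I" "g \<le> m'" using less.hyps m'(1) by blast
    then show ?thesis using m'(2) by (auto intro: order_trans)
  qed
qed

theorem mainTheorem4:
  fixes n r i k :: nat and e :: "nat \<Rightarrow> nat" and I J :: "(nat \<Rightarrow> nat) set"
  assumes "r \<le> n"
    and "\<forall>j<r. 2 \<le> e j"
    and "\<forall>j1 j2. j1 \<le> j2 \<and> j2 < r \<longrightarrow> e j1 \<le> e j2"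
    and "strongly_stable n J"
    and "monomial_ideal n I"
    and "P_ideal n r e \<union> J \<subseteq> I"
    and "i < k" and "k < n"
  shows "J \<subseteq> compression n i k
           (if k < r then gen_ideal n (min_gens I - {var_pow k (e k)}) else I)
         \<union> P_ideal n r e"
proof
  fix m assume mJ: "m \<in> J"
  define I' where "I' = (if k < r then gen_ideal n (min_gens I - {var_pow k (e k)}) else I)"
  have Jm: "J \<subseteq> monoms n" using assms(4) unfolding strongly_stable_def monomial_ideal_def by auto
  have Im: "I \<subseteq> monoms n" using assms(5) unfolding monomial_ideal_def by auto
  have mm: "m \<in> monoms n" using mJ Jm by auto
  have "m \<in> compression n i k I' \<or> m \<in> P_ideal n r e"
  proof (cases "m \<in> P_ideal n r e")
    case True then show ?thesis by simp
  next
    case False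
    have qlt: "m k < e k" if kr: "k < r"
    proof (rule ccontr)
      assume "\<not> m k < e k"
      then have le: "var_pow k (e k) \<le> m" by (auto simp: le_fun_def var_pow_def)
      have "var_pow k (e k) \<in> {var_pow j (e j) | j. j < r}" using kr by blast
      then have "m \<in> P_ideal n r e" using mm le unfolding P_ideal_def gen_ideal_def by blast
      then show False using False by simp
    qed
    define p where "p = m i"
    define q where "q = m k"
    define f where "f = m(i:=0, k:=0)"
    have uJ: "j \<le> q \<Longrightarrow> m(i := p + j, k := q - j) \<in> J" for j
    proof (induction j)
      case 0 then show ?case using mJ by (simp add: p_def q_def)
    next
      case (Suc j)
      define u where "u = m(i := p + j, k := q - j)"
      have jq: "j \<le> q" using Suc.prems by simp
      have uJ: "u \<in> J" unfolding u_def by (rule Suc.IH[OF jq])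
      define m0 where "m0 = u(k := q - Suc j)"
      have m0m: "m0 \<in> monoms n" using uJ Jm assms(8) unfolding m0_def monoms_def by auto
      have "m0(k := m0 k + 1) = u" using Suc.prems unfolding m0_def u_def by (auto simp: fun_eq_iff)
      then have "m0(k := m0 k + 1) \<in> J" using uJ by simp
      then have "m0(i := m0 i + 1) \<in> J"
        using assms(4) m0m assms(7,8) unfolding strongly_stable_def by blast
      moreover have "m0(i := m0 i + 1) = m(i := p + Suc j, k := q - Suc j)"
        using assms(7) unfolding m0_def u_def by (auto simp: fun_eq_iff)
      ultimately show ?case by (metis add_Suc_right)
    qed
    have uI': "m(i := p + j, k := q - j) \<in> I'" if jq: "j \<le> q" for j
    proof -
      let ?u = "m(i := p + j, k := q - j)"
      have uI: "?u \<in> I" using uJ[OF jq] assms(6) by auto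
      have um: "?u \<in> monoms n" using uI Im by auto
      show ?thesis
      proof (cases "k < r")
        case True
        obtain g where g: "g \<in> min_gens I" "g \<le> ?u" using min_gen_below[OF Im uI] by blast
        have "?u k < e k" using qlt[OF True] by (simp add: q_def)
        then have "g \<noteq> var_pow k (e k)" using g(2) unfolding le_fun_def var_pow_def
          by (metis (full_types) not_le)
        then show ?thesis using g um True unfolding I'_def gen_ideal_def by auto
      next
        case False then show ?thesis using uI unfolding I'_def by simp
      qed
    qed
    have I'up: "\<And>x y. x \<in> I' \<Longrightarrow> y \<in> monoms n \<Longrightarrow> x \<le> y \<Longrightarrow> y \<in> I'"
      using assms(5) unfolding I'_def gen_ideal_def monomial_ideal_def
      by (auto intro: order_trans split: if_splits)
    have fm: "f \<in> monoms n" using mm unfolding f_def monoms_def by auto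
    have mi2: "monomial_ideal2 (fiber I' i k f)"
      unfolding monomial_ideal2_def fiber_def
    proof (intro allI impI)
      fix a b a' b' assume h: "(a, b) \<in> {(p, q). f(i := p, k := q) \<in> I'} \<and> a \<le> a' \<and> b \<le> b'"
      have "f(i := a', k := b') \<in> monoms n" using fm assms(7,8) unfolding monoms_def by auto
      moreover have "f(i := a, k := b) \<le> f(i := a', k := b')" using h by (auto simp: le_fun_def)
      ultimately show "(a', b') \<in> {(p, q). f(i := p, k := q) \<in> I'}" using h I'up by auto
    qed
    have sub: "(\<lambda>j. (p+j, q-j)) ` {0..q} \<subseteq> deg_part2 (fiber I' i k f) (p+q)"
    proof
      fix x assume "x \<in> (\<lambda>j. (p+j, q-j)) ` {0..q}"
      then obtain j where j: "j \<le> q" "x = (p+j, q-j)" by auto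
      have "f(i := p+j, k := q-j) = m(i := p + j, k := q - j)"
        unfolding f_def using assms(7) by (auto simp: fun_eq_iff)
      then show "x \<in> deg_part2 (fiber I' i k f) (p+q)"
        using uI'[OF j(1)] j unfolding deg_part2_def fiber_def by auto
    qed
    have "card ((\<lambda>j. (p+j, q-j)) ` {0..q}) = q + 1"
      by (subst card_image) (auto simp: inj_on_def)
    then have "q + 1 \<le> card (deg_part2 (fiber I' i k f) (p+q))"
      using card_mono[OF deg_fin sub] by simp
    then have "(p,q) \<in> lex_of (fiber I' i k f)" using lex_of_char[OF mi2] by simp
    then have "m \<in> compression n i k I'"
      unfolding compression_def using mm by (simp add: p_def q_def f_def)
    then show ?thesis by simp
  qed
  then show "m \<in> compression n i k
           (if k < r then gen_ideal n (min_gens I - {var_pow k (e k)}) else I)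
         \<union> P_ideal n r e" unfolding I'_def by blast
qed

end
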